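(* Let $G$ be an execution graph satisfying $\mathit{BE}(G)$, $T$ a thread, $q$ an iteration index with $\mathit{WI}_G^T(q)$, and $m\le\mathit{len}_G^T(q)$. Write $a=\mathit{start}_G^T(q)+m$ and $b=\mathit{start}_G^T(q+1)+m$. Then: (1) $e_G^T(a)=e_G^T(b)$; (2) $v_G^T(a)=v_G^T(b)$; (3) $k_G^T(a)=k_G^T(b)$; (4) for every register $r$ with $\sigma_G^T(a)(r)\neq\sigma_G^T(b)(r)$ there is $u\in[\mathit{start}_G^T(q):\mathit{end}_G^T(q)]$ with $r\in\mathit{vis}_G^T(u,b)$.
   Context: Programs. There are finite sets $\mathit{Register}$, $\mathit{Value}$, $\mathit{Location}$; $\mathit{State}=\mathit{Register}\to\mathit{Value}$; an update is a partial map $\mathit{Register}\rightharpoonup\mathit{Value}$, and $(\sigma\ll\mu)(r)=\mu(r)$ if $r\in\mathrm{Dom}(\mu)$, else $\sigma(r)$. Events are reads $R^m(x)$, writes $W^m(x,v)$, fences $F^m$, error $E$. A program consists of finitely many threads $T$, each with a finite statement sequence $P_T(0),\dots,P_T(|P_T|-1)$. A statement is $\mathtt{step}(\epsilon,\delta)$ with $\epsilon:\mathit{State}\to\mathit{Event}$, $\delta:\mathit{State}\times(\mathit{Value}\cup\{\bot\})\to\mathit{Update}$, or $\mathtt{await}(n,\kappa)$ with $n\in\mathbb N$, $\kappa:\mathit{State}\to\{0,1\}$. Syntactic restriction: if $P_T(k)=\mathtt{await}(n,\cdot)$ then $n\le k$ and no $P_T(k')$ with $k'\in[k-n:k)$ is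 an await. ($[a:b)=\{a,\dots,b-1\}$, $[a:b]=\{a,\dots,b\}$.) An execution graph $G$ has a set $G.\mathrm E$ of triples $\langle T,t,e\rangle$ and a partial reads-from map $G.\mathrm{rf}$ from reads to writes. Thread-local semantics: $k_G^T(0)=0$, $\sigma_G^T(0)$ fixed; if $k_G^T(t)\ge|P_T|$ or no triple $\langle T,t,\cdot\rangle$ is in $G.\mathrm E$, execution stops ($N_G^T=t$). Otherwise with $S=P_T(k_G^T(t))$: $e_G^T(t)=\epsilon(\sigma_G^T(t))$ for $S=\mathtt{step}(\epsilon,\cdot)$, $F^{\mathrm{rlx}}$ for an await; $v_G^T(t)$ is the value of the write that $G.\mathrm{rf}$ assigns to $\langle T,t,e_G^T(t)\rangle$ if this is a read with defined rf, else $\bot$. For a step: $k_G^T(t+1)=k_G^T(t)+1$; if $e_G^T(t)$ is a read with $v_G^T(t)=\bot$ then $N_G^T=t+1$, $\sigma_G^T(t+1)=\sigma_G^T(t)$, else $\sigma_G^T(t+1)=\sigma_G^T(t)\ll\delta(\sigma_G^T(t),v_G^T(t))$. For $\mathtt{await}(n,\kappa)$: $\sigma_G^T(t+1)=\sigma_G^T(t)$ and $k_G^T(t+1)=k_G^T(t)+1$ if $\kappa(\sigma_G^T(t))=0$, else $k_G^T(t)-n$. Awaits: $\mathit{end}_G^T(0)<\mathit{end}_G^T(1)<\cdots$ enumerate the steps $t$ at which $P_T(k_G^T(t))$ is an await; $\mathit{len}_G^T(q)=n$ where $P_T(k_G^T(\mathit{end}_G^T(q)))=\mathtt{await}(n,\kappa)$;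 $\mathit{start}_G^T(q)=\mathit{end}_G^T(q)-\mathit{len}_G^T(q)$; $\mathit{fail}_G^T(q)$ iff $\kappa(\sigma_G^T(\mathit{end}_G^T(q)))=1$. $\mathit{WI}_G^T(q)$ holds iff $\mathit{fail}_G^T(q)$ and for every $m\le\mathit{len}_G^T(q)$ such that $e_G^T(\mathit{start}_G^T(q)+m)$ is a read, the events of steps $\mathit{start}_G^T(q)+m$ and $\mathit{start}_G^T(q+1)+m$ of $T$ are mapped by $G.\mathrm{rf}$ to the same write. Bounded effect. $\delta_G^T(t)=\delta(\sigma_G^T(t),v_G^T(t))$ if $P_T(k_G^T(t))=\mathtt{step}(\cdot,\delta)$ and not ($e_G^T(t)$ is a read and $v_G^T(t)=\bot$); otherwise the empty update. $\mathit{vis}_G^T(t,u)=\mathrm{Dom}(\delta_G^T(t))\setminus\bigcup_{t<u'<u}\mathrm{Dom}(\delta_G^T(u'))$. $F(\mathtt{step}(\epsilon,\delta))=\{\epsilon,\delta\}$, $F(\mathtt{await}(n,\kappa))=\{\kappa\}$. A function $f$ depends on $R\subseteq\mathit{Register}$ iff there are states $\sigma,\sigma'$ with $\sigma(r)=\sigma'(r)$ for all $r\notin R$ and $f(\sigma)\neq f(\sigma')$ (for $f=\delta$: $\delta(\sigma,v)\neq\delta(\sigma',v)$ for some $v$). Step $t$ of $T$ register-reads-from to step $u$ ($t\to_{\mathrm{rrf}}u$) iff $u\ge t$ and some $f\in F(P_T(k_G^T(u)))$ depends on $\mathit{vis}_G^T(t,u)$. $\mathit{BE}(G)$ holds iff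 for all threads $T$, all $q$ with $\mathit{fail}_G^T(q)$ and all $t\in[\mathit{start}_G^T(q):\mathit{end}_G^T(q))$: $e_G^T(t)$ is not a write, and $t\to_{\mathrm{rrf}}u$ implies $u\in[\mathit{start}_G^T(q):\mathit{end}_G^T(q))$. *)

theory Defs
  imports Main
begin

text \<open>Access modes (they play no role in the lemma; await steps emit a relaxed fence).\<close>
datatype mode = NA | Rlx | Acq | Rel | AcqRel | SC

datatype ('l, 'v) event =
    Read mode 'l
  | Write mode 'l 'v
  | Fence mode
  | Err

fun is_read :: "('l, 'v) event \<Rightarrow> bool" where
  "is_read (Read _ _) = True" | "is_read _ = False"

fun is_write :: "('l, 'v) event \<Rightarrow> bool" where
  "is_write (Write _ _ _) = True" | "is_write _ = False"

type_synonym ('r, 'v) state = "'r \<Rightarrow> 'v"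
type_synonym ('r, 'v) update = "'r \<rightharpoonup> 'v"

definition upd :: "('r, 'v) state \<Rightarrow> ('r, 'v) update \<Rightarrow> ('r, 'v) state" where
  "upd \<sigma> \<mu> = (\<lambda>r. case \<mu> r of Some v \<Rightarrow> v | None \<Rightarrow> \<sigma> r)"

text \<open>step(eps, delta) and await(n, kappa); the value argument None stands for bottom,
  and kappa returning True stands for 1.\<close>
datatype ('r, 'v, 'l) stmt =
    Step "('r, 'v) state \<Rightarrow> ('l, 'v) event" "('r, 'v) state \<Rightarrow> 'v option \<Rightarrow> ('r, 'v) update"
  | Await nat "('r, 'v) state \<Rightarrow> bool"

fun is_await :: "('r, 'v, 'l) stmt \<Rightarrow> bool" where
  "is_await (Await _ _) = True" | "is_await _ = False"

type_synonym ('t, 'r, 'v, 'l) prog = "'t \<Rightarrow> ('r, 'v, 'l) stmt list"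

definition wf_prog :: "('t, 'r, 'v, 'l) prog \<Rightarrow> bool" where
  "wf_prog P \<longleftrightarrow> (\<forall>T k n \<kappa>. k < length (P T) \<and> P T ! k = Await n \<kappa> \<longrightarrow>
       n \<le> k \<and> (\<forall>k' \<in> {k - n..<k}. \<not> is_await (P T ! k')))"

type_synonym ('t, 'l, 'v) gevent = "'t \<times> nat \<times> ('l, 'v) event"

record ('t, 'l, 'v) graph =
  E  :: "('t, 'l, 'v) gevent set"
  rf :: "('t, 'l, 'v) gevent \<rightharpoonup> ('t, 'l, 'v) gevent"

definition wf_graph :: "('t, 'l, 'v) graph \<Rightarrow> bool" where
  "wf_graph G \<longleftrightarrow> (\<forall>x y. rf G x = Some y \<longrightarrow>
      x \<in> E G \<and> is_read (snd (snd x)) \<and> y \<in> E G \<and> is_write (snd (snd y)))"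

fun wval :: "('t, 'l, 'v) gevent \<Rightarrow> 'v option" where
  "wval (_, _, Write _ _ v) = Some v" | "wval _ = None"

definition readval :: "('t, 'l, 'v) graph \<Rightarrow> 't \<Rightarrow> nat \<Rightarrow> ('l, 'v) event \<Rightarrow> 'v option" where
  "readval G T t e = (if is_read e then Option.bind (rf G (T, t, e)) wval else None)"

text \<open>conf P s0 G T t = (k(t), sigma(t), ok) where ok says that execution has not
  stopped before reaching step t (i.e. N > t is still possible).  Once stopped the
  configuration is frozen; only steps with runs t (i.e. t < N) are meaningful.\<close>
primrec conf :: "('t, 'r, 'v, 'l) prog \<Rightarrow> ('t \<Rightarrow> ('r, 'v) state) \<Rightarrow> ('t, 'l, 'v) graph
                  \<Rightarrow> 't \<Rightarrow> nat \<Rightarrow> nat \<times> ('r, 'v) state \<times> bool" where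
  "conf P s0 G T 0 = (0, s0 T, True)"
| "conf P s0 G T (Suc t) =
    (case conf P s0 G T t of (k, \<sigma>, ok) \<Rightarrow>
      if ok \<and> k < length (P T) \<and> (\<exists>e. (T, t, e) \<in> E G) then
        (case P T ! k of
           Step \<epsilon> \<delta> \<Rightarrow>
             (let e = \<epsilon> \<sigma>; v = readval G T t e in
               if is_read e \<and> v = None then (Suc k, \<sigma>, False)
               else (Suc k, upd \<sigma> (\<delta> \<sigma> v), True))
         | Await n \<kappa> \<Rightarrow> (if \<kappa> \<sigma> then k - n else Suc k, \<sigma>, True))
      else (k, \<sigma>, False))"

definition kG :: "('t, 'r, 'v, 'l) prog \<Rightarrow> ('t \<Rightarrow> ('r, 'v) state) \<Rightarrow> ('t, 'l, 'v) graph
                  \<Rightarrow> 't \<Rightarrow> nat \<Rightarrow> nat" where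
  "kG P s0 G T t = fst (conf P s0 G T t)"

definition sigmaG :: "('t, 'r, 'v, 'l) prog \<Rightarrow> ('t \<Rightarrow> ('r, 'v) state) \<Rightarrow> ('t, 'l, 'v) graph
                  \<Rightarrow> 't \<Rightarrow> nat \<Rightarrow> ('r, 'v) state" where
  "sigmaG P s0 G T t = fst (snd (conf P s0 G T t))"

text \<open>Step t of thread T is executed, i.e. t < N_G^T.\<close>
definition runs :: "('t, 'r, 'v, 'l) prog \<Rightarrow> ('t \<Rightarrow> ('r, 'v) state) \<Rightarrow> ('t, 'l, 'v) graph
                  \<Rightarrow> 't \<Rightarrow> nat \<Rightarrow> bool" where
  "runs P s0 G T t \<longleftrightarrow> snd (snd (conf P s0 G T t)) \<and> kG P s0 G T t < length (P T)
                       \<and> (\<exists>e. (T, t, e) \<in> E G)"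

definition stmtG :: "('t, 'r, 'v, 'l) prog \<Rightarrow> ('t \<Rightarrow> ('r, 'v) state) \<Rightarrow> ('t, 'l, 'v) graph
                  \<Rightarrow> 't \<Rightarrow> nat \<Rightarrow> ('r, 'v, 'l) stmt" where
  "stmtG P s0 G T t = P T ! kG P s0 G T t"

definition eG :: "('t, 'r, 'v, 'l) prog \<Rightarrow> ('t \<Rightarrow> ('r, 'v) state) \<Rightarrow> ('t, 'l, 'v) graph
                  \<Rightarrow> 't \<Rightarrow> nat \<Rightarrow> ('l, 'v) event" where
  "eG P s0 G T t = (case stmtG P s0 G T t of
                      Step \<epsilon> \<delta> \<Rightarrow> \<epsilon> (sigmaG P s0 G T t)
                    | Await n \<kappa> \<Rightarrow> Fence Rlx)"

definition vG :: "('t, 'r, 'v, 'l) prog \<Rightarrow> ('t \<Rightarrow> ('r, 'v) state) \<Rightarrow> ('t, 'l, 'v) graph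
                  \<Rightarrow> 't \<Rightarrow> nat \<Rightarrow> 'v option" where
  "vG P s0 G T t = readval G T t (eG P s0 G T t)"

definition await_steps :: "('t, 'r, 'v, 'l) prog \<Rightarrow> ('t \<Rightarrow> ('r, 'v) state) \<Rightarrow> ('t, 'l, 'v) graph
                  \<Rightarrow> 't \<Rightarrow> nat set" where
  "await_steps P s0 G T = {t. runs P s0 G T t \<and> is_await (stmtG P s0 G T t)}"

text \<open>t is end(q): the q-th (0-based) await step in increasing order.\<close>
definition is_end :: "('t, 'r, 'v, 'l) prog \<Rightarrow> ('t \<Rightarrow> ('r, 'v) state) \<Rightarrow> ('t, 'l, 'v) graph
                  \<Rightarrow> 't \<Rightarrow> nat \<Rightarrow> nat \<Rightarrow> bool" where
  "is_end P s0 G T q t \<longleftrightarrow> t \<in> await_steps P s0 G T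
       \<and> card {u \<in> await_steps P s0 G T. u < t} = q"

definition has_end :: "('t, 'r, 'v, 'l) prog \<Rightarrow> ('t \<Rightarrow> ('r, 'v) state) \<Rightarrow> ('t, 'l, 'v) graph
                  \<Rightarrow> 't \<Rightarrow> nat \<Rightarrow> bool" where
  "has_end P s0 G T q \<longleftrightarrow> (\<exists>t. is_end P s0 G T q t)"

definition endG :: "('t, 'r, 'v, 'l) prog \<Rightarrow> ('t \<Rightarrow> ('r, 'v) state) \<Rightarrow> ('t, 'l, 'v) graph
                  \<Rightarrow> 't \<Rightarrow> nat \<Rightarrow> nat" where
  "endG P s0 G T q = (THE t. is_end P s0 G T q t)"

fun await_len :: "('r, 'v, 'l) stmt \<Rightarrow> nat" where
  "await_len (Await n _) = n" | "await_len _ = 0"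

fun await_cond :: "('r, 'v, 'l) stmt \<Rightarrow> ('r, 'v) state \<Rightarrow> bool" where
  "await_cond (Await _ \<kappa>) \<sigma> = \<kappa> \<sigma>" | "await_cond _ _ = False"

definition lenG :: "('t, 'r, 'v, 'l) prog \<Rightarrow> ('t \<Rightarrow> ('r, 'v) state) \<Rightarrow> ('t, 'l, 'v) graph
                  \<Rightarrow> 't \<Rightarrow> nat \<Rightarrow> nat" where
  "lenG P s0 G T q = await_len (stmtG P s0 G T (endG P s0 G T q))"

definition startG :: "('t, 'r, 'v, 'l) prog \<Rightarrow> ('t \<Rightarrow> ('r, 'v) state) \<Rightarrow> ('t, 'l, 'v) graph
                  \<Rightarrow> 't \<Rightarrow> nat \<Rightarrow> nat" where
  "startG P s0 G T q = endG P s0 G T q - lenG P s0 G T q"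

definition failG :: "('t, 'r, 'v, 'l) prog \<Rightarrow> ('t \<Rightarrow> ('r, 'v) state) \<Rightarrow> ('t, 'l, 'v) graph
                  \<Rightarrow> 't \<Rightarrow> nat \<Rightarrow> bool" where
  "failG P s0 G T q \<longleftrightarrow> has_end P s0 G T q \<and>
      await_cond (stmtG P s0 G T (endG P s0 G T q)) (sigmaG P s0 G T (endG P s0 G T q))"

text \<open>WI(q); it refers to iteration q+1, whose existence is part of the notion.\<close>
definition WI :: "('t, 'r, 'v, 'l) prog \<Rightarrow> ('t \<Rightarrow> ('r, 'v) state) \<Rightarrow> ('t, 'l, 'v) graph
                  \<Rightarrow> 't \<Rightarrow> nat \<Rightarrow> bool" where
  "WI P s0 G T q \<longleftrightarrow> failG P s0 G T q \<and> has_end P s0 G T (Suc q) \<and>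
     (\<forall>m \<le> lenG P s0 G T q.
        is_read (eG P s0 G T (startG P s0 G T q + m)) \<longrightarrow>
          (let a = startG P s0 G T q + m; b = startG P s0 G T (Suc q) + m in
             rf G (T, a, eG P s0 G T a) \<noteq> None \<and>
             rf G (T, a, eG P s0 G T a) = rf G (T, b, eG P s0 G T b)))"

definition deltaG :: "('t, 'r, 'v, 'l) prog \<Rightarrow> ('t \<Rightarrow> ('r, 'v) state) \<Rightarrow> ('t, 'l, 'v) graph
                  \<Rightarrow> 't \<Rightarrow> nat \<Rightarrow> ('r, 'v) update" where
  "deltaG P s0 G T t = (case stmtG P s0 G T t of
      Step \<epsilon> \<delta> \<Rightarrow> (if is_read (eG P s0 G T t) \<and> vG P s0 G T t = None then Map.empty
                    else \<delta> (sigmaG P s0 G T t) (vG P s0 G T t))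
    | Await n \<kappa> \<Rightarrow> Map.empty)"

definition vis :: "('t, 'r, 'v, 'l) prog \<Rightarrow> ('t \<Rightarrow> ('r, 'v) state) \<Rightarrow> ('t, 'l, 'v) graph
                  \<Rightarrow> 't \<Rightarrow> nat \<Rightarrow> nat \<Rightarrow> 'r set" where
  "vis P s0 G T t u = dom (deltaG P s0 G T t) - (\<Union>u' \<in> {t<..<u}. dom (deltaG P s0 G T u'))"

definition depends :: "(('r, 'v) state \<Rightarrow> 'b) \<Rightarrow> 'r set \<Rightarrow> bool" where
  "depends f R \<longleftrightarrow> (\<exists>\<sigma> \<sigma>'. (\<forall>r. r \<notin> R \<longrightarrow> \<sigma> r = \<sigma>' r) \<and> f \<sigma> \<noteq> f \<sigma>')"

definition depends2 :: "(('r, 'v) state \<Rightarrow> 'v option \<Rightarrow> 'b) \<Rightarrow> 'r set \<Rightarrow> bool" where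
  "depends2 f R \<longleftrightarrow> (\<exists>\<sigma> \<sigma>' v. (\<forall>r. r \<notin> R \<longrightarrow> \<sigma> r = \<sigma>' r) \<and> f \<sigma> v \<noteq> f \<sigma>' v)"

fun stmt_depends :: "('r, 'v, 'l) stmt \<Rightarrow> 'r set \<Rightarrow> bool" where
  "stmt_depends (Step \<epsilon> \<delta>) R \<longleftrightarrow> depends \<epsilon> R \<or> depends2 \<delta> R"
| "stmt_depends (Await n \<kappa>) R \<longleftrightarrow> depends \<kappa> R"

definition rrf :: "('t, 'r, 'v, 'l) prog \<Rightarrow> ('t \<Rightarrow> ('r, 'v) state) \<Rightarrow> ('t, 'l, 'v) graph
                  \<Rightarrow> 't \<Rightarrow> nat \<Rightarrow> nat \<Rightarrow> bool" where
  "rrf P s0 G T t u \<longleftrightarrow> runs P s0 G T u \<and> t \<le> u \<and>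
      stmt_depends (stmtG P s0 G T u) (vis P s0 G T t u)"

definition BE :: "('t, 'r, 'v, 'l) prog \<Rightarrow> ('t \<Rightarrow> ('r, 'v) state) \<Rightarrow> ('t, 'l, 'v) graph \<Rightarrow> bool" where
  "BE P s0 G \<longleftrightarrow> (\<forall>T q. failG P s0 G T q \<longrightarrow>
     (\<forall>t \<in> {startG P s0 G T q..<endG P s0 G T q}.
        \<not> is_write (eG P s0 G T t) \<and>
        (\<forall>u. rrf P s0 G T t u \<longrightarrow> u \<in> {startG P s0 G T q..<endG P s0 G T q})))"

end

theory Submission
  imports Defs
begin


lemma nodep_union:
  assumes "finite I" "\<forall>i\<in>I. \<not> depends f (V i)"
  shows "\<not> depends f (\<Union>i\<in>I. V i)"
  using assms
proof (induction I rule: finite_induct)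
  case empty then show ?case unfolding depends_def by (metis UN_empty empty_iff ext)
next
  case (insert i I)
  show ?case
  proof
    assume "depends f (\<Union>j\<in>insert i I. V j)"
    then obtain \<sigma> \<sigma>' where d: "\<forall>r. r \<notin> V i \<union> (\<Union>j\<in>I. V j) \<longrightarrow> \<sigma> r = \<sigma>' r" "f \<sigma> \<noteq> f \<sigma>'"
      by (auto simp: depends_def)
    define \<sigma>'' where "\<sigma>'' = (\<lambda>r. if r \<in> V i then \<sigma>' r else \<sigma> r)"
    have h1: "\<not> depends f (V i)" using insert.prems by simp
    have h2: "\<not> depends f (\<Union>j\<in>I. V j)" using insert.prems insert.IH by simp
    have a1: "\<forall>r. r \<notin> V i \<longrightarrow> \<sigma> r = \<sigma>'' r" by (simp add: \<sigma>''_def)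
    have a2: "\<forall>r. r \<notin> (\<Union>j\<in>I. V j) \<longrightarrow> \<sigma>'' r = \<sigma>' r" using d(1) by (simp add: \<sigma>''_def)
    have "f \<sigma> = f \<sigma>''" using h1 a1 unfolding depends_def by blast
    moreover have "f \<sigma>'' = f \<sigma>'" using h2 a2 unfolding depends_def by blast
    ultimately show False using d(2) by simp
  qed
qed

lemma nodep2_union:
  assumes "finite I" "\<forall>i\<in>I. \<not> depends2 f (V i)"
  shows "\<not> depends2 f (\<Union>i\<in>I. V i)"
proof -
  have "\<not> depends (\<lambda>\<sigma>. f \<sigma> v) (\<Union>i\<in>I. V i)" for v
  proof -
    have "\<forall>i\<in>I. \<not> depends (\<lambda>\<sigma>. f \<sigma> v) (V i)"
      using assms(2) unfolding depends_def depends2_def by blast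
    then show ?thesis by (rule nodep_union[OF assms(1)])
  qed
  then show ?thesis by (auto simp: depends_def depends2_def)
qed

context
  fixes P :: "('t, 'r, 'v, 'l) prog" and s0 :: "'t \<Rightarrow> ('r, 'v) state"
    and G :: "('t, 'l, 'v) graph" and T :: 't
begin

abbreviation "ok t \<equiv> snd (snd (conf P s0 G T t))"
abbreviation "kk \<equiv> kG P s0 G T"
abbreviation "sg \<equiv> sigmaG P s0 G T"
abbreviation "st \<equiv> stmtG P s0 G T"
abbreviation "rn \<equiv> runs P s0 G T"
abbreviation "dl \<equiv> deltaG P s0 G T"

lemma kk0: "kk 0 = 0" by (simp add: kG_def)

lemma ok_Suc: "ok (Suc t) \<Longrightarrow> rn t"
proof -
  assume a: "ok (Suc t)"
  obtain k \<sigma> b0 where c: "conf P s0 G T t = (k,\<sigma>,b0)" by (cases "conf P s0 G T t") auto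
  show ?thesis using a c
    by (auto simp: runs_def kG_def Let_def split: if_splits stmt.splits)
qed

lemma runs_mono: "rn t' \<Longrightarrow> t \<le> t' \<Longrightarrow> rn t"
proof (induction t' arbitrary: t)
  case 0 then show ?case by simp
next
  case (Suc t')
  show ?case
  proof (cases "t = Suc t'")
    case True then show ?thesis using Suc by simp
  next
    case False
    have "ok (Suc t')" using Suc.prems(1) unfolding runs_def by (rule conjunct1)
    then have "rn t'" by (rule ok_Suc)
    moreover have "t \<le> t'" using Suc.prems(2) False by simp
    ultimately show ?thesis using Suc.IH by blast
  qed
qed

lemma runs_Suc:
  assumes "rn t"
  shows "conf P s0 G T (Suc t) = (case st t of
      Step \<epsilon> \<delta> \<Rightarrow> (Suc (kk t), upd (sg t) (dl t), \<not> (is_read (eG P s0 G T t) \<and> vG P s0 G T t = None))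
    | Await n \<kappa> \<Rightarrow> (if \<kappa> (sg t) then kk t - n else Suc (kk t), sg t, True))"
proof -
  obtain k \<sigma> b0 where c: "conf P s0 G T t = (k,\<sigma>,b0)" by (cases "conf P s0 G T t") auto
  have e: "upd \<sigma> Map.empty = \<sigma>" by (simp add: upd_def)
  show ?thesis using assms c e
    by (auto simp: runs_def kG_def sigmaG_def stmtG_def eG_def deltaG_def vG_def Let_def split: stmt.splits)
qed

lemma k_step: "rn t \<Longrightarrow> st t = Step \<epsilon> \<delta> \<Longrightarrow> kk (Suc t) = Suc (kk t)"
  using runs_Suc[of t] by (simp add: kG_def)

lemma k_await: "rn t \<Longrightarrow> st t = Await n \<kappa> \<Longrightarrow>
   kk (Suc t) = (if \<kappa> (sg t) then kk t - n else Suc (kk t))"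
  using runs_Suc[of t] by (simp add: kG_def)

lemma upd_empty[simp]: "upd \<sigma> Map.empty = \<sigma>" by (simp add: upd_def)

lemma sg_Suc: "rn t \<Longrightarrow> sg (Suc t) = upd (sg t) (dl t)"
  using runs_Suc[of t] by (auto simp: sigmaG_def deltaG_def split: stmt.splits)

lemma st_def': "st t = P T ! kk t" by (simp add: stmtG_def)

lemma back_lem:
  assumes wf: "wf_prog P" and r: "rn Ee" and s: "st Ee = Await n \<kappa>"
  shows "j \<le> n \<Longrightarrow> j \<le> Ee \<and> kk (Ee - j) = kk Ee - j \<and> (0 < j \<longrightarrow> \<not> is_await (st (Ee-j)))"
proof (induction j)
  case 0 then show ?case by simp
next
  case (Suc j)
  define K where "K = kk Ee"
  have KL: "K < length (P T)" using r by (simp add: runs_def K_def)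
  have PK: "P T ! K = Await n \<kappa>" using s by (simp add: st_def' K_def)
  have wfK: "n \<le> K" "\<forall>k'\<in>{K-n..<K}. \<not> is_await (P T ! k')"
    using wf KL PK unfolding wf_prog_def by blast+
  have IH: "j \<le> Ee" "kk (Ee - j) = K - j" using Suc by (auto simp: K_def)
  have "Ee - j \<noteq> 0"
  proof
    assume "Ee - j = 0"
    then have "K - j = 0" using IH kk0 by metis
    then show False using wfK Suc.prems by simp
  qed
  then have jE: "Suc j \<le> Ee" using IH by simp
  define t0 where "t0 = Ee - Suc j"
  have t0s: "Suc t0 = Ee - j" using jE by (simp add: t0_def)
  have rt0: "rn t0" using runs_mono[OF r] by (simp add: t0_def)
  have L0: "kk t0 < length (P T)" using rt0 by (simp add: runs_def)
  have main: "kk t0 = K - Suc j \<and> \<not> is_await (st t0)"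
  proof (cases "P T ! kk t0")
    case (Step \<epsilon> \<delta>)
    then have "kk (Suc t0) = Suc (kk t0)" using k_step[OF rt0] by (simp add: st_def')
    then show ?thesis using IH t0s Step by (simp add: st_def')
  next
    case (Await n' \<kappa>')
    define p where "p = kk t0"
    have wfp: "n' \<le> p" "\<forall>k'\<in>{p-n'..<p}. \<not> is_await (P T ! k')"
      using wf L0 Await unfolding wf_prog_def p_def by blast+
    have ks: "kk (Suc t0) = (if \<kappa>' (sg t0) then p - n' else Suc p)"
      using k_await[OF rt0] Await by (simp add: st_def' p_def)
    have eq: "kk (Suc t0) = K - j" using IH t0s by simp
    show ?thesis
    proof (cases "\<kappa>' (sg t0)")
      case False
      then have "p = K - Suc j" using ks eq Suc.prems wfK by simp
      then have "p \<in> {K-n..<K}" using Suc.prems wfK by auto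
      then have "\<not> is_await (P T ! p)" using wfK by blast
      then show ?thesis using Await p_def by simp
    next
      case True
      then have pe: "p - n' = K - j" using ks eq by simp
      consider "p = K" | "p > K" | "p < K" by linarith
      then show ?thesis
      proof cases
        case 1
        then have "n' = n" using PK Await p_def by simp
        then show ?thesis using pe 1 Suc.prems wfK wfp by simp
      next
        case 2
        then have "K \<in> {p-n'..<p}" using pe by auto
        then have "\<not> is_await (P T ! K)" using wfp by blast
        then show ?thesis using PK by simp
      next
        case 3
        then have "p \<in> {K-n..<K}" using pe Suc.prems by auto
        then have "\<not> is_await (P T ! p)" using wfK by blast
        then show ?thesis using Await p_def by simp
      qed
    qed
  qed
  show ?case using main jE by (simp add: t0_def K_def)
qed

lemma fwd:
  assumes wf: "wf_prog P" and r: "rn E0" and s: "st E0 = Await n \<kappa>" and f: "\<kappa> (sg E0)"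
  shows "i \<le> n \<Longrightarrow> rn (Suc E0 + i) \<Longrightarrow> kk (Suc E0 + i) = kk E0 - n + i"
proof (induction i)
  case 0 then show ?case using k_await[OF r s] f by simp
next
  case (Suc i)
  define K where "K = kk E0"
  have KL: "K < length (P T)" using r by (simp add: runs_def K_def)
  have PK: "P T ! K = Await n \<kappa>" using s by (simp add: st_def' K_def)
  have wfK: "n \<le> K" "\<forall>k'\<in>{K-n..<K}. \<not> is_await (P T ! k')"
    using wf KL PK unfolding wf_prog_def by blast+
  have ri: "rn (Suc E0 + i)" using runs_mono[OF Suc.prems(2)] by simp
  have IH: "kk (Suc E0 + i) = K - n + i" using Suc ri by (simp add: K_def)
  have "K - n + i \<in> {K-n..<K}" using Suc.prems wfK by auto
  then have na: "\<not> is_await (P T ! (K - n + i))" using wfK by blast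
  then obtain \<epsilon> \<delta> where "st (Suc E0 + i) = Step \<epsilon> \<delta>" using IH
    by (cases "P T ! (K - n + i)") (auto simp: st_def')
  then have "kk (Suc (Suc E0 + i)) = Suc (kk (Suc E0 + i))" using k_step[OF ri] by simp
  then show ?case using IH by (simp add: K_def)
qed

lemma end_mono_aux:
  assumes "is_end P s0 G T q t" "is_end P s0 G T q' t'" "t < t'"
  shows "insert t {u \<in> await_steps P s0 G T. u < t} \<subseteq> {u \<in> await_steps P s0 G T. u < t'}"
  using assms by (auto simp: is_end_def)

lemma end_mono:
  assumes "is_end P s0 G T q t" "is_end P s0 G T q' t'" "t < t'"
  shows "q < q'"
proof -
  have "card (insert t {u \<in> await_steps P s0 G T. u < t}) \<le> card {u \<in> await_steps P s0 G T. u < t'}"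
    by (rule card_mono[OF _ end_mono_aux[OF assms]]) simp
  then show ?thesis using assms(1,2) by (simp add: is_end_def)
qed

lemma end_gap:
  assumes "is_end P s0 G T q t" "is_end P s0 G T q' t'" "t < s" "s < t'" "s \<in> await_steps P s0 G T"
  shows "Suc q < q'"
proof -
  have "insert s (insert t {u \<in> await_steps P s0 G T. u < t}) \<subseteq> {u \<in> await_steps P s0 G T. u < t'}"
    using assms by (auto simp: is_end_def)
  then have "card (insert s (insert t {u \<in> await_steps P s0 G T. u < t})) \<le> card {u \<in> await_steps P s0 G T. u < t'}"
    by (rule card_mono[rotated]) simp
  then show ?thesis using assms by (simp add: is_end_def)
qed

lemma end_unique: "is_end P s0 G T q t \<Longrightarrow> is_end P s0 G T q t' \<Longrightarrow> t = t'"
  using end_mono[of q t q t'] end_mono[of q t' q t] by (metis less_irrefl nat_neq_iff)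

lemma endG_eq: "is_end P s0 G T q t \<Longrightarrow> endG P s0 G T q = t"
  unfolding endG_def using end_unique by blast

lemma diff_vis:
  "t \<le> t' \<Longrightarrow> (\<forall>x. t \<le> x \<and> x < t' \<longrightarrow> rn x) \<Longrightarrow> sg t' r \<noteq> sg t r \<Longrightarrow>
    \<exists>u\<in>{t..<t'}. r \<in> vis P s0 G T u t'"
proof (induction t')
  case 0 then show ?case by simp
next
  case (Suc t')
  show ?case
  proof (cases "t = Suc t'")
    case True then show ?thesis using Suc by simp
  next
    case False
    then have tt: "t \<le> t'" using Suc by simp
    have rt: "rn t'" using Suc.prems tt by simp
    show ?thesis
    proof (cases "r \<in> dom (dl t')")
      case True
      moreover have "{t'<..<Suc t'} = {}" by auto
      ultimately have "r \<in> vis P s0 G T t' (Suc t')" by (simp add: vis_def)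
      then show ?thesis using tt by auto
    next
      case False
      then have "dl t' r = None" by auto
      then have "sg (Suc t') r = sg t' r" by (simp add: sg_Suc[OF rt] upd_def)
      then obtain u where u: "u \<in> {t..<t'}" "r \<in> vis P s0 G T u t'"
        using Suc tt by auto
      have "{u<..<Suc t'} = insert t' {u<..<t'}" using u by auto
      then have "r \<in> vis P s0 G T u (Suc t')" using u False by (auto simp: vis_def)
      then show ?thesis using u by auto
    qed
  qed
qed

lemma vis_ext: "r \<in> vis P s0 G T u t' \<Longrightarrow> u < t' \<Longrightarrow> r \<notin> dom (dl t') \<Longrightarrow> r \<in> vis P s0 G T u (Suc t')"
proof -
  assume a: "r \<in> vis P s0 G T u t'" "u < t'" "r \<notin> dom (dl t')"
  have "{u<..<Suc t'} = insert t' {u<..<t'}" using a by auto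
  then show ?thesis using a by (auto simp: vis_def)
qed


lemma dl_await: "st t = Await n \<kappa> \<Longrightarrow> dl t = Map.empty"
  by (simp add: deltaG_def)

lemma vis_await: "st t = Await n \<kappa> \<Longrightarrow> vis P s0 G T t u = {}"
  by (simp add: vis_def deltaG_def)

lemma main:
  assumes wf: "wf_prog P" and be: "BE P s0 G" and wi: "WI P s0 G T q"
    and mle: "m \<le> lenG P s0 G T q"
  shows "eG P s0 G T (startG P s0 G T q + m) = eG P s0 G T (startG P s0 G T (Suc q) + m) \<and>
         vG P s0 G T (startG P s0 G T q + m) = vG P s0 G T (startG P s0 G T (Suc q) + m) \<and>
         kk (startG P s0 G T q + m) = kk (startG P s0 G T (Suc q) + m) \<and>
         (\<forall>r. sg (startG P s0 G T q + m) r \<noteq> sg (startG P s0 G T (Suc q) + m) r \<longrightarrow>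
           (\<exists>u \<in> {startG P s0 G T q..endG P s0 G T q}. r \<in> vis P s0 G T u (startG P s0 G T (Suc q) + m)))"
proof -
  have fq: "failG P s0 G T q" and hq1: "has_end P s0 G T (Suc q)" using wi by (auto simp: WI_def)
  obtain E0 where e0: "is_end P s0 G T q E0" using fq by (auto simp: failG_def has_end_def)
  obtain E1 where e1: "is_end P s0 G T (Suc q) E1" using hq1 by (auto simp: has_end_def)
  have endq: "endG P s0 G T q = E0" by (rule endG_eq[OF e0])
  have endq1: "endG P s0 G T (Suc q) = E1" by (rule endG_eq[OF e1])
  have r0: "rn E0" and aw0: "is_await (st E0)" using e0 by (auto simp: is_end_def await_steps_def)
  obtain n \<kappa> where s0E: "st E0 = Await n \<kappa>" using aw0 by (cases "st E0") auto
  have kap: "\<kappa> (sg E0)" using fq s0E endq by (simp add: failG_def)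
  have lenq: "lenG P s0 G T q = n" using s0E endq by (simp add: lenG_def)
  have startq: "startG P s0 G T q = E0 - n" using lenq endq by (simp add: startG_def)
  define K where "K = kk E0"
  have KL: "K < length (P T)" using r0 by (simp add: runs_def K_def)
  have PK: "P T ! K = Await n \<kappa>" using s0E by (simp add: st_def' K_def)
  have wfK: "n \<le> K" "\<forall>k'\<in>{K-n..<K}. \<not> is_await (P T ! k')"
    using wf KL PK unfolding wf_prog_def by blast+
  have nE0: "n \<le> E0" using back_lem[OF wf r0 s0E, of n] by simp
  have "E1 \<noteq> E0" using e0 e1 by (auto simp: is_end_def)
  moreover have "\<not> E1 < E0" using end_mono[OF e1 e0] by auto
  ultimately have E01: "E0 < E1" by simp
  have r1: "rn E1" using e1 by (auto simp: is_end_def await_steps_def)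
  have rle1: "rn x" if "x \<le> E1" for x using runs_mono[OF r1 that] .
  have kf: "kk (Suc E0 + i) = K - n + i" if "i \<le> n" "Suc E0 + i \<le> E1" for i
    using fwd[OF wf r0 s0E kap that(1) rle1[OF that(2)]] by (simp add: K_def)
  have na: "\<not> is_await (P T ! (K - n + i))" if "i < n" for i
  proof -
    have "K - n + i \<in> {K-n..<K}" using that wfK by auto
    then show ?thesis using wfK by blast
  qed
  have le1: "i \<le> n \<longrightarrow> Suc E0 + i \<le> E1" for i
  proof (induction i)
    case 0 then show ?case using E01 by simp
  next
    case (Suc i)
    show ?case
    proof
      assume "Suc i \<le> n"
      then have h: "Suc E0 + i \<le> E1" "i < n" using Suc by auto
      have "Suc E0 + i \<noteq> E1"
      proof
        assume "Suc E0 + i = E1"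
        then have "is_await (st (Suc E0 + i))" using e1 by (simp add: is_end_def await_steps_def)
        then show False using na[OF h(2)] kf[of i] h by (simp add: st_def')
      qed
      then show "Suc E0 + Suc i \<le> E1" using h by simp
    qed
  qed
  have E1eq: "E1 = Suc E0 + n"
  proof (rule ccontr)
    assume ne: "E1 \<noteq> Suc E0 + n"
    have lt: "Suc E0 + n < E1" using le1[of n] ne by simp
    have "kk (Suc E0 + n) = K" using kf[of n] lt wfK by simp
    then have "Suc E0 + n \<in> await_steps P s0 G T"
      using rle1[of "Suc E0 + n"] lt PK by (simp add: await_steps_def st_def')
    then show False using end_gap[OF e0 e1 _ lt] by simp
  qed
  have s1E: "st E1 = Await n \<kappa>" using kf[of n] E1eq wfK PK by (simp add: st_def')
  have startq1: "startG P s0 G T (Suc q) = Suc E0" using s1E endq1 E1eq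
    by (simp add: startG_def lenG_def)
  define A where "A m = E0 - n + m" for m
  define B where "B m = Suc E0 + m" for m
  have kA: "kk (A m) = K - n + m" if "m \<le> n" for m
  proof -
    have "kk (E0 - (n - m)) = K - (n - m)" using back_lem[OF wf r0 s0E, of "n - m"] by (simp add: K_def)
    then show ?thesis using that nE0 wfK by (simp add: A_def)
  qed
  have kB: "kk (B m) = K - n + m" if "m \<le> n" for m
    using kf[of m] that E1eq by (simp add: B_def)
  have rA: "rn (A m)" if "m \<le> n" for m using rle1 that E01 nE0 by (simp add: A_def)
  have rB: "rn (B m)" if "m \<le> n" for m using rle1 that E1eq by (simp add: B_def)
  have stAB: "st (A m) = st (B m)" if "m \<le> n" for m using kA kB that by (simp add: st_def')
  have BE': "\<not> rrf P s0 G T u (B m)" if "u \<in> {E0-n..<E0}" for u m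
  proof
    assume rr: "rrf P s0 G T u (B m)"
    have "\<forall>t\<in>{startG P s0 G T q..<endG P s0 G T q}. \<forall>u. rrf P s0 G T t u \<longrightarrow> u \<in> {startG P s0 G T q..<endG P s0 G T q}"
      using be fq unfolding BE_def by blast
    then have "B m \<in> {E0-n..<E0}" using rr that unfolding startq endq by blast
    then show False by (simp add: B_def)
  qed
  define Inv where "Inv m \<longleftrightarrow> (\<forall>r. sg (A m) r \<noteq> sg (B m) r \<longrightarrow> (\<exists>u \<in> {E0-n..E0}. r \<in> vis P s0 G T u (B m)))" for m
  have stepf: "eG P s0 G T (A m) = eG P s0 G T (B m) \<and> vG P s0 G T (A m) = vG P s0 G T (B m) \<and> dl (A m) = dl (B m)"
    if mn: "m < n" and iv: "Inv m" for m
  proof -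
    obtain \<epsilon> \<delta> where stB: "st (B m) = Step \<epsilon> \<delta>" using na[OF mn] kB[of m] mn
      by (cases "P T ! (K - n + m)") (auto simp: st_def')
    have stA: "st (A m) = Step \<epsilon> \<delta>" using stB stAB[of m] mn by simp
    define R where "R = (\<Union>u\<in>{E0-n..<E0}. vis P s0 G T u (B m))"
    have nd: "\<not> depends \<epsilon> (vis P s0 G T u (B m)) \<and> \<not> depends2 \<delta> (vis P s0 G T u (B m))"
      if "u \<in> {E0-n..<E0}" for u
      using BE'[OF that, of m] rB[of m] mn that stB by (auto simp: rrf_def B_def)
    have ndR: "\<not> depends \<epsilon> R" "\<not> depends2 \<delta> R"
      unfolding R_def
       apply (rule nodep_union; use nd in blast)
      apply (rule nodep2_union; use nd in blast)
      done
    have agree: "\<forall>r. r \<notin> R \<longrightarrow> sg (A m) r = sg (B m) r"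
    proof (intro allI impI)
      fix r assume "r \<notin> R"
      show "sg (A m) r = sg (B m) r"
      proof (rule ccontr)
        assume "sg (A m) r \<noteq> sg (B m) r"
        then obtain u where u: "u \<in> {E0-n..E0}" "r \<in> vis P s0 G T u (B m)" using iv by (auto simp: Inv_def)
        have "u \<noteq> E0" using u vis_await[OF s0E] by auto
        then show False using u \<open>r \<notin> R\<close> by (auto simp: R_def)
      qed
    qed
    have epseq: "\<epsilon> (sg (A m)) = \<epsilon> (sg (B m))" using ndR(1) agree unfolding depends_def by blast
    have deleq: "\<delta> (sg (A m)) v = \<delta> (sg (B m)) v" for v using ndR(2) agree unfolding depends2_def by blast
    have eeq: "eG P s0 G T (A m) = eG P s0 G T (B m)" using stA stB epseq by (simp add: eG_def)
    have veq: "vG P s0 G T (A m) = vG P s0 G T (B m)"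
    proof (cases "is_read (eG P s0 G T (A m))")
      case True
      have "rf G (T, A m, eG P s0 G T (A m)) = rf G (T, B m, eG P s0 G T (B m))"
        using wi True mn lenq unfolding WI_def Let_def startq startq1 A_def B_def by auto
      then show ?thesis using eeq by (simp add: vG_def readval_def)
    next
      case False then show ?thesis using eeq by (simp add: vG_def readval_def)
    qed
    have "dl (A m) = dl (B m)" using stA stB eeq veq deleq by (simp add: deltaG_def)
    then show ?thesis using eeq veq by simp
  qed
  have inv: "m \<le> n \<longrightarrow> Inv m" for m
  proof (induction m)
    case 0
    have sgB: "sg (B 0) = sg E0" using sg_Suc[OF r0] dl_await[OF s0E] by (simp add: B_def)
    show ?case unfolding Inv_def
    proof (intro impI allI)
      fix r assume "sg (A 0) r \<noteq> sg (B 0) r"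
      then have "sg E0 r \<noteq> sg (E0 - n) r" using sgB by (simp add: A_def)
      moreover have "\<forall>x. E0 - n \<le> x \<and> x < E0 \<longrightarrow> rn x" using rle1 E01 by simp
      ultimately obtain u where u: "u \<in> {E0-n..<E0}" "r \<in> vis P s0 G T u E0"
        using diff_vis[of "E0 - n" E0 r] by auto
      have "r \<in> vis P s0 G T u (Suc E0)" using vis_ext[OF u(2)] u(1) dl_await[OF s0E] by auto
      then show "\<exists>u \<in> {E0-n..E0}. r \<in> vis P s0 G T u (B 0)" using u(1) by (auto simp: B_def)
    qed
  next
    case (Suc m)
    show ?case
    proof
      assume sm: "Suc m \<le> n"
      then have mn: "m < n" and iv: "Inv m" using Suc by auto
      note sf = stepf[OF mn iv]
      have sA: "sg (A (Suc m)) = upd (sg (A m)) (dl (A m))" using sg_Suc[OF rA[of m]] mn by (simp add: A_def)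
      have sB: "sg (B (Suc m)) = upd (sg (B m)) (dl (B m))" using sg_Suc[OF rB[of m]] mn by (simp add: B_def)
      show "Inv (Suc m)" unfolding Inv_def
      proof (intro allI impI)
        fix r assume d: "sg (A (Suc m)) r \<noteq> sg (B (Suc m)) r"
        then have nd: "r \<notin> dom (dl (B m))" using sA sB sf by (auto simp: upd_def)
        then have "sg (A m) r \<noteq> sg (B m) r" using d sA sB sf by (auto simp: upd_def split: option.splits)
        then obtain u where u: "u \<in> {E0-n..E0}" "r \<in> vis P s0 G T u (B m)" using iv by (auto simp: Inv_def)
        have "r \<in> vis P s0 G T u (Suc (B m))" using vis_ext[OF u(2) _ nd] u(1) by (simp add: B_def)
        then show "\<exists>u\<in>{E0 - n..E0}. r \<in> vis P s0 G T u (B (Suc m))" using u(1) by (auto simp: B_def)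
      qed
    qed
  qed
  have mn: "m \<le> n" using mle lenq by simp
  have ev: "eG P s0 G T (A m) = eG P s0 G T (B m) \<and> vG P s0 G T (A m) = vG P s0 G T (B m)"
  proof (cases "m < n")
    case True then show ?thesis using stepf inv by auto
  next
    case False
    then have "m = n" using mn by simp
    then have "st (A m) = Await n \<kappa>" "st (B m) = Await n \<kappa>" using kA kB wfK PK by (simp_all add: st_def')
    then show ?thesis by (simp add: eG_def vG_def readval_def)
  qed
  have "A m = startG P s0 G T q + m" "B m = startG P s0 G T (Suc q) + m"
    using startq startq1 by (simp_all add: A_def B_def)
  then show ?thesis using ev kA[OF mn] kB[OF mn] inv[of m] mn endq startq
    by (simp add: Inv_def)
qed

end



theorem lemma5:
  fixes P :: "('t::finite, 'r::finite, 'v::finite, 'l::finite) prog"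
    and s0 :: "'t \<Rightarrow> ('r, 'v) state"
    and G :: "('t, 'l, 'v) graph"
    and T :: 't and q m :: nat
  assumes "wf_prog P" and "wf_graph G"
    and "BE P s0 G"
    and "WI P s0 G T q"
    and "m \<le> lenG P s0 G T q"
  defines "a \<equiv> startG P s0 G T q + m"
    and "b \<equiv> startG P s0 G T (Suc q) + m"
  shows "eG P s0 G T a = eG P s0 G T b \<and>
         vG P s0 G T a = vG P s0 G T b \<and>
         kG P s0 G T a = kG P s0 G T b \<and>
         (\<forall>r. sigmaG P s0 G T a r \<noteq> sigmaG P s0 G T b r \<longrightarrow>
           (\<exists>u \<in> {startG P s0 G T q..endG P s0 G T q}. r \<in> vis P s0 G T u b))"
  unfolding a_def b_def using main[OF assms(1) assms(3) assms(4) assms(5)] by blast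

end
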